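(* Let $p$ be a prime, $\mathbb{C}_p$ the field of complex $p$-adic numbers with norm $|\cdot|_p$, $a,b,c\in\mathbb{C}_p$ with $b\neq0$, $c\neq ab$, $f(x)=\frac{x+a}{bx+c}$ for $x\neq -c/b$. Fix a square root $\sqrt{(c-1)^2+4ab}$ and let $x_{1}=\frac{1-c+\sqrt{(c-1)^2+4ab}}{2b}$ (a fixed point of $f$). Assume $$\left|\frac{c-ab}{(bx_1+c)^2}\right|_p<1\qquad\text{and}\qquad\left|\frac{b}{bx_1+c}\right|_p<1,$$ and put $\delta_2=\left|\frac{bx_1+c}{b}\right|_p-1$. Then $$\bigcup_{\delta\ge 0,\ \delta\neq 1+\delta_2} S_\delta(x_1)\subset A(x_1).$$
   Context: $S_\delta(x_1)=\{x\in\mathbb{C}_p:|x-x_1|_p=\delta\}$ (so $S_0(x_1)=\{x_1\}$). The basin of attraction of a fixed point $x_0$ is $A(x_0)=\{y\in\mathbb{C}_p: f^n(y)\to x_0 \text{ as } n\to\infty\}$. *)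

theory Defs
  imports Complex_Main "HOL-Computational_Algebra.Computational_Algebra"
begin

text \<open>We characterise it axiomatically:
  a field of characteristic 0 with an absolute value N that is non-archimedean,
  restricts to the p-adic absolute value on the integers (hence on Q),
  is complete, algebraically closed, and in which the elements algebraic over Q
  are dense. These properties determine (C_p, |.|_p) up to isometric isomorphism.\<close>

definition is_Cp_abs :: "nat \<Rightarrow> ('a::field_char_0 \<Rightarrow> real) \<Rightarrow> bool" where
  "is_Cp_abs p N \<longleftrightarrow>
     prime p \<and>
     (\<forall>x. N x \<ge> 0) \<and> (\<forall>x. N x = 0 \<longleftrightarrow> x = 0) \<and>
     (\<forall>x y. N (x * y) = N x * N y) \<and>
     (\<forall>x y. N (x + y) \<le> max (N x) (N y)) \<and>
     (\<forall>n::int. n \<noteq> 0 \<longrightarrow> N (of_int n) = real p powr (- real (multiplicity (int p) n))) \<and>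
     (\<forall>u::nat \<Rightarrow> 'a. (\<forall>e>0. \<exists>M. \<forall>m\<ge>M. \<forall>n\<ge>M. N (u m - u n) < e)
          \<longrightarrow> (\<exists>L. \<forall>e>0. \<exists>M. \<forall>n\<ge>M. N (u n - L) < e)) \<and>
     (\<forall>P::'a poly. degree P > 0 \<longrightarrow> (\<exists>x. poly P x = 0)) \<and>
     (\<forall>x. \<forall>e>0. \<exists>y. (\<exists>Q::int poly. Q \<noteq> 0 \<and> poly (map_poly of_int Q) y = 0) \<and> N (x - y) < e)"

definition sphere_N :: "('a::field \<Rightarrow> real) \<Rightarrow> 'a \<Rightarrow> real \<Rightarrow> 'a set" where
  "sphere_N N x1 \<delta> = {x. N (x - x1) = \<delta>}"

text \<open>The map f(x) = (x+a)/(bx+c); only meaningful where bx+c \<noteq> 0.\<close>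
definition mob :: "'a::field \<Rightarrow> 'a \<Rightarrow> 'a \<Rightarrow> 'a \<Rightarrow> 'a" where
  "mob a b c x = (x + a) / (b * x + c)"

definition basin :: "('a::field \<Rightarrow> real) \<Rightarrow> 'a \<Rightarrow> 'a \<Rightarrow> 'a \<Rightarrow> 'a \<Rightarrow> 'a set" where
  "basin N a b c x0 = {y. (\<forall>n. b * ((mob a b c ^^ n) y) + c \<noteq> 0) \<and>
       (\<forall>e>0. \<exists>M. \<forall>n\<ge>M. N ((mob a b c ^^ n) y - x0) < e)}"

end

theory Submission
  imports Defs
begin

locale nabs =
  fixes N :: "'a::field \<Rightarrow> real"
  assumes nn: "\<And>x. N x \<ge> 0"
    and z: "\<And>x. N x = 0 \<longleftrightarrow> x = 0"
    and m: "\<And>x y. N (x * y) = N x * N y"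
    and u: "\<And>x y. N (x + y) \<le> max (N x) (N y)"
begin

lemma one: "N 1 = 1"
proof -
  have "N 1 = N 1 * N 1" using m[of 1 1] by simp
  moreover have "N 1 \<noteq> 0" using z by simp
  ultimately show ?thesis by (metis mult_cancel_left1)
qed

lemma neg: "N (- x) = N x"
proof -
  have "N (-1) * N (-1) = 1" using m[of "-1" "-1"] one by simp
  then have "N (-1) ^ 2 = 1" by (simp add: power2_eq_square)
  then have "N (-1) = 1" using nn[of "-1"] power2_eq_1_iff by force
  then show ?thesis using m[of "-1" x] by simp
qed

lemma dv: "N (x / y) = N x / N y"
proof (cases "y = 0")
  case True then show ?thesis using z[of 0] by simp
next
  case False
  have "N (x / y) * N y = N x" using m[of "x/y" y] False by simp
  moreover have "N y \<noteq> 0" using z False by simp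
  ultimately show ?thesis by (simp add: field_simps)
qed

lemma small: "N v < 1 \<Longrightarrow> N (1 + v) = 1"
proof -
  assume h: "N v < 1"
  have "N (1 + v) \<le> 1" using u[of 1 v] one h by simp
  moreover have "N 1 \<le> max (N (1 + v)) (N (- v))" using u[of "1+v" "-v"] by simp
  ultimately show ?thesis using one neg h by (simp add: max_def split: if_splits)
qed

lemma big: "N v > 1 \<Longrightarrow> N (1 + v) = N v"
proof -
  assume h: "N v > 1"
  have "N (1 + v) \<le> N v" using u[of 1 v] one h by simp
  moreover have "N v \<le> max (N (1 + v)) (N (- 1))" using u[of "1+v" "-1"] by simp
  ultimately show ?thesis using one neg h by (simp add: max_def split: if_splits)
qed

end

lemma cp_nabs: "is_Cp_abs p N \<Longrightarrow> nabs N"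
  unfolding is_Cp_abs_def nabs_def by blast

theorem theorem3p7:
  fixes p :: nat and N :: "'a::field_char_0 \<Rightarrow> real" and a b c s :: 'a
  assumes "is_Cp_abs p N"
    and "b \<noteq> 0" and "c \<noteq> a * b"
    and "s^2 = (c - 1)^2 + 4 * a * b"
    and "x1 = (1 - c + s) / (2 * b)"
    and "N ((c - a * b) / (b * x1 + c)^2) < 1"
    and "N (b / (b * x1 + c)) < 1"
    and "\<delta>2 = N ((b * x1 + c) / b) - 1"
  shows "(\<Union>\<delta>\<in>{\<delta>. \<delta> \<ge> 0 \<and> \<delta> \<noteq> 1 + \<delta>2}. sphere_N N x1 \<delta>) \<subseteq> basin N a b c x1"
proof -
  interpret nabs N using cp_nabs[OF assms(1)] .
  define q where "q = b * x1 + c"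
  define A where "A = (c - a * b) / q^2"
  define B where "B = b / q"
  define f where "f = mob a b c"
  have fix1: "b * x1^2 + (c - 1) * x1 = a"
  proof -
    have "s = 2 * b * x1 + (c - 1)" using assms(2,5) by (simp add: field_simps)
    then have "(2 * b * x1 + (c - 1))^2 = (c - 1)^2 + 4 * a * b" using assms(4)
      by simp
    then have "4 * b * (b * x1^2 + (c - 1) * x1) = 4 * b * a"
      by (simp add: algebra_simps power2_eq_square)
    then show ?thesis using assms(2) by simp
  qed
  have cab: "c - a * b = (1 - b * x1) * q"
  proof -
    have "b * (b * x1^2 + (c - 1) * x1) = b * a" using fix1 by simp
    then show ?thesis unfolding q_def by (simp add: algebra_simps power2_eq_square)
  qed
  have q0: "q \<noteq> 0"
  proof
    assume "q = 0"
    then have "c - a * b = 0" using cab by simp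
    then show False using assms(3) by simp
  qed
  have NA: "N A < 1" using assms(6) unfolding A_def q_def .
  have NB: "N B < 1" using assms(7) unfolding B_def q_def .
  have NB0: "N B > 0" using z[of B] nn[of B] assms(2) q0 unfolding B_def by auto
  have NA0: "N A \<ge> 0" using nn by simp
  have den: "b * x + c = q * (1 + B * (x - x1))" for x
    unfolding B_def q_def using q0 q_def by (simp add: field_simps)
  have fx: "f x - x1 = A * (x - x1) / (1 + B * (x - x1))" if "1 + B * (x - x1) \<noteq> 0" for x
  proof -
    have d: "b * x + c \<noteq> 0" using den[of x] that q0 by simp
    have "f x - x1 = (x + a - x1 * (b * x + c)) / (b * x + c)"
      unfolding f_def mob_def using d by (simp add: field_simps)
    also have "x + a - x1 * (b * x + c) = (1 - b * x1) * (x - x1)"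
      using fix1[symmetric] by (simp add: algebra_simps power2_eq_square)
    finally have "f x - x1 = (1 - b * x1) * (x - x1) / (q * (1 + B * (x - x1)))"
      using den[of x] by simp
    also have "\<dots> = A * (x - x1) / (1 + B * (x - x1))"
    proof -
      have "A = (1 - b * x1) * q / (q * q)" unfolding A_def cab by (simp only: power2_eq_square)
      also have "\<dots> = (1 - b * x1) / q" using q0 by simp
      finally have eA: "A = (1 - b * x1) / q" .
      show ?thesis unfolding eA by (simp only: times_divide_eq_left divide_divide_eq_left)
    qed
    finally show ?thesis .
  qed
  have stepS: "b * x + c \<noteq> 0 \<and> N (f x - x1) = N A * N (x - x1)"
    if "N B * N (x - x1) < 1" for x
  proof -
    have "N (B * (x - x1)) < 1" using that m by simp
    then have e: "N (1 + B * (x - x1)) = 1" using small by blast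
    have ne: "1 + B * (x - x1) \<noteq> 0"
    proof
      assume "1 + B * (x - x1) = 0"
      then show False using e z[of 0] by simp
    qed
    have d: "b * x + c \<noteq> 0" using den[of x] q0 ne by simp
    have "N (f x - x1) = N A * N (x - x1)" unfolding fx[OF ne] dv m e by simp
    then show ?thesis using d by blast
  qed
  have stepL: "b * x + c \<noteq> 0 \<and> N (f x - x1) = N A / N B"
    if "N B * N (x - x1) > 1" for x
  proof -
    have "N (B * (x - x1)) > 1" using that m by simp
    then have e: "N (1 + B * (x - x1)) = N B * N (x - x1)" using big m by metis
    have ne: "1 + B * (x - x1) \<noteq> 0"
    proof
      assume "1 + B * (x - x1) = 0"
      then have "N B * N (x - x1) = 0" using e z[of 0] by simp
      then show False using that by linarith
    qed
    have n0: "N (x - x1) \<noteq> 0" using that by auto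
    have d: "b * x + c \<noteq> 0" using den[of x] q0 ne by simp
    have "N (f x - x1) = N A * N (x - x1) / (N B * N (x - x1))" unfolding fx[OF ne] dv m e by simp
    also have "\<dots> = N A / N B" using n0 by simp
    finally show ?thesis using d by blast
  qed
  have orbit: "\<forall>n. b * ((f ^^ n) w) + c \<noteq> 0 \<and> N ((f ^^ n) w - x1) = N A ^ n * N (w - x1)"
    if "N B * N (w - x1) < 1" for w
  proof
    fix n show "b * ((f ^^ n) w) + c \<noteq> 0 \<and> N ((f ^^ n) w - x1) = N A ^ n * N (w - x1)"
    proof (induction n)
      case 0 then show ?case using stepS[OF that] by simp
    next
      case (Suc n)
      have le: "N A ^ n \<le> 1" using NA NA0 by (simp add: power_le_one)
      have "N B * N ((f ^^ n) w - x1) \<le> N B * N (w - x1)"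
      proof -
        have "N A ^ n * N (w - x1) \<le> N (w - x1)"
          using le nn[of "w - x1"] by (metis mult_left_le_one_le mult.commute NA0 zero_le_power)
        then show ?thesis using Suc.IH NB0 by simp
      qed
      then have h: "N B * N ((f ^^ n) w - x1) < 1" using that by linarith
      have "N ((f ^^ Suc n) w - x1) = N A * N ((f ^^ n) w - x1)" using stepS[OF h] by simp
      moreover have "N B * N ((f ^^ Suc n) w - x1) < 1"
      proof -
        have "N B * N ((f ^^ Suc n) w - x1) = N A * (N B * N ((f ^^ n) w - x1))"
          using calculation by simp
        also have "\<dots> \<le> N B * N ((f ^^ n) w - x1)"
          using NA NA0 nn NB0 by (simp add: mult_left_le_one_le)
        finally show ?thesis using h by linarith
      qed
      ultimately show ?case using stepS[of "(f ^^ Suc n) w"] Suc.IH by simp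
    qed
  qed
  have conv: "\<forall>e>0. \<exists>M. \<forall>n\<ge>M. N A ^ n * C < e" for C :: real
  proof -
    have "(\<lambda>n. N A ^ n * C) \<longlonglongrightarrow> 0 * C"
      by (intro tendsto_mult tendsto_const LIMSEQ_power_zero) (use NA NA0 in simp)
    then have "(\<lambda>n. N A ^ n * C) \<longlonglongrightarrow> 0" by simp
    then show ?thesis
      by (metis (no_types, lifting) LIMSEQ_iff abs_less_iff diff_zero real_norm_def)
  qed
  have B1: "1 + \<delta>2 = 1 / N B"
    unfolding assms(8) B_def q_def using dv by simp
  show ?thesis
  proof
    fix y assume "y \<in> (\<Union>\<delta>\<in>{\<delta>. \<delta> \<ge> 0 \<and> \<delta> \<noteq> 1 + \<delta>2}. sphere_N N x1 \<delta>)"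
    then have ne: "N (y - x1) \<noteq> 1 / N B" unfolding sphere_N_def B1 by auto
    have "N B * N (y - x1) < 1 \<or> N B * N (y - x1) > 1"
    proof -
      have "N B * N (y - x1) \<noteq> 1" using ne NB0 by (auto simp: field_simps)
      then show ?thesis by linarith
    qed
    then show "y \<in> basin N a b c x1"
    proof
      assume h: "N B * N (y - x1) < 1"
      from orbit[OF h] conv[of "N (y - x1)"] show ?thesis
        unfolding basin_def f_def by simp
    next
      assume h: "N B * N (y - x1) > 1"
      have s1: "b * y + c \<noteq> 0" and s2: "N (f y - x1) = N A / N B" using stepL[OF h] by auto
      have h2: "N B * N (f y - x1) < 1" using s2 NB0 NA by simp
      have o: "\<forall>n. b * ((f ^^ n) (f y)) + c \<noteq> 0 \<and> N ((f ^^ n) (f y) - x1) = N A ^ n * N (f y - x1)"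
        using orbit[OF h2] .
      have all: "b * ((f ^^ n) y) + c \<noteq> 0" for n
      proof (cases n)
        case 0 then show ?thesis using s1 by simp
      next
        case (Suc k) then show ?thesis using o by (simp add: funpow_Suc_right del: funpow.simps)
      qed
      have lim: "\<exists>M. \<forall>n\<ge>M. N ((f ^^ n) y - x1) < e" if e0: "e > 0" for e
      proof -
        obtain M where M: "\<forall>n\<ge>M. N A ^ n * N (f y - x1) < e" using conv[of "N (f y - x1)"] e0 by blast
        have "\<forall>n\<ge>Suc M. N ((f ^^ n) y - x1) < e"
        proof (intro allI impI)
          fix n assume "n \<ge> Suc M"
          then obtain k where k: "n = Suc k" "k \<ge> M" by (cases n) auto
          have "(f ^^ n) y = (f ^^ k) (f y)" using k by (simp add: funpow_Suc_right del: funpow.simps)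
          then show "N ((f ^^ n) y - x1) < e" using o M k by simp
        qed
        then show ?thesis by blast
      qed
      show ?thesis unfolding basin_def f_def[symmetric] using all lim by simp
    qed
  qed
qed

end
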